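(* The expected runtime (number of fitness evaluations) of the (1+1)~IA$^{\text{hyp}}_{\ge}$ on $\textsc{LeadingOnes}(x)=\sum_{i=1}^n\prod_{j=1}^i x_j$ is $\Theta(n^3)$.
   Context: The (1+1)~IA$^{\text{hyp}}_{\ge}$ keeps one bit string $x\in\{0,1\}^n$ (uniformly random initially); each iteration it creates $y$ by static hypermutation with FCM and sets $x:=y$ if $f(y)\ge f(x)$ (maximisation). Static hypermutation with FCM has a constant parameter $0<c\le1$ and mutation potential $M=cn$ (an integer): distinct bit positions are chosen uniformly at random without replacement and flipped one after another; each intermediate string is evaluated (one fitness evaluation each); the process stops at the first string $z$ with $f(z)\ge f(x)$ (constructive mutation) or after $M$ flips, and the last string is $y$. *)

theory Defs
  imports "HOL-Probability.Probability"
begin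

text \<open>Bit strings of length n are represented as bool lists of length n;
  position i (1-based in the paper) is list index i-1.\<close>

definition leading_ones :: "nat \<Rightarrow> bool list \<Rightarrow> nat" where
  "leading_ones n x = (\<Sum>i=1..n. \<Prod>j=1..i. (if x ! (j - 1) then 1 else 0))"

definition flip_bit :: "bool list \<Rightarrow> nat \<Rightarrow> bool list" where
  "flip_bit z p = z[p := \<not> z ! p]"

fun hyp_fcm :: "(bool list \<Rightarrow> nat) \<Rightarrow> bool list \<Rightarrow> bool list \<Rightarrow> nat list \<Rightarrow> nat \<Rightarrow> bool list \<times> nat" where
  "hyp_fcm f x z [] cnt = (z, cnt)"
| "hyp_fcm f x z (p # ps) cnt =
     (let z' = flip_bit z p in
      if f z' \<ge> f x then (z', Suc cnt) else hyp_fcm f x z' ps (Suc cnt))"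

text \<open>Positions chosen uniformly at random without replacement: the first M
  entries of a uniformly random ordering of {0..<n}.\<close>
definition hypermutation :: "nat \<Rightarrow> nat \<Rightarrow> (bool list \<Rightarrow> nat) \<Rightarrow> bool list \<Rightarrow> (bool list \<times> nat) pmf" where
  "hypermutation n M f x =
     map_pmf (\<lambda>ps. hyp_fcm f x x (take M ps) 0) (pmf_of_set (permutations_of_set {0..<n}))"

definition ia_step :: "nat \<Rightarrow> nat \<Rightarrow> (bool list \<Rightarrow> nat) \<Rightarrow> bool list \<Rightarrow> (bool list \<times> nat) pmf" where
  "ia_step n M f x =
     map_pmf (\<lambda>(y, c). (if f y \<ge> f x then y else x, c)) (hypermutation n M f x)"

text \<open>Distribution of the current string after k iterations, where the process
  is stopped (made absorbing) once the optimum (the all-ones string) is the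
  current string.\<close>
fun ia_state :: "nat \<Rightarrow> nat \<Rightarrow> (bool list \<Rightarrow> nat) \<Rightarrow> nat \<Rightarrow> bool list pmf" where
  "ia_state n M f 0 = pmf_of_set {x. length x = n}"
| "ia_state n M f (Suc k) =
     bind_pmf (ia_state n M f k)
       (\<lambda>x. if x = replicate n True then return_pmf x else map_pmf fst (ia_step n M f x))"

text \<open>Expected runtime: number of fitness evaluations until the optimum is found,
  counting 1 evaluation for the initial string plus all evaluations made by the
  hypermutations of all iterations before the optimum is reached.\<close>
definition ia_expected_runtime :: "nat \<Rightarrow> nat \<Rightarrow> (bool list \<Rightarrow> nat) \<Rightarrow> ennreal" where
  "ia_expected_runtime n M f =
     1 + (\<Sum>k. \<integral>\<^sup>+ x. (if x = replicate n True then 0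
                       else \<integral>\<^sup>+ yc. ennreal (real (snd yc)) \<partial>measure_pmf (ia_step n M f x))
                  \<partial>measure_pmf (ia_state n M f k))"

end

theory Submission
  imports Defs
begin

definition lo :: "bool list \<Rightarrow> nat" where "lo x = length (takeWhile id x)"

lemma LO_Cons: "leading_ones (Suc n) (b#x) = (if b then Suc (leading_ones n x) else 0)"
proof -
  have P: "(\<Prod>j=1..Suc i. (if (b#x) ! (j - 1) then 1 else 0::nat)) =
        (if b then 1 else 0) * (\<Prod>j=1..i. (if x ! (j - 1) then 1 else 0::nat))" for i
  proof -
    have "(\<Prod>j=1..Suc i. (if (b#x) ! (j - 1) then 1 else 0::nat)) =
          (if b then 1 else 0) * (\<Prod>j=Suc 1..Suc i. (if (b#x) ! (j - 1) then 1 else 0))"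
      by (subst prod.atLeast_Suc_atMost) auto
    also have "(\<Prod>j=Suc 1..Suc i. (if (b#x) ! (j - 1) then 1 else 0::nat)) =
       (\<Prod>j=1..i. (if (b#x) ! (Suc j - 1) then 1 else 0))"
      by (rule prod.shift_bounds_cl_Suc_ivl)
    also have "\<dots> = (\<Prod>j=1..i. (if x ! (j - 1) then 1 else 0))"
      by (rule prod.cong) (auto simp: nth_Cons')
    finally show ?thesis .
  qed
  have "leading_ones (Suc n) (b#x) = (\<Sum>i=1..Suc n. \<Prod>j=1..i. (if (b#x) ! (j - 1) then 1 else 0))"
    by (simp add: leading_ones_def)
  also have "\<dots> = (if b then 1 else 0) + (\<Sum>i=Suc 1..Suc n. \<Prod>j=1..i. (if (b#x) ! (j - 1) then 1 else 0))"
    by (subst sum.atLeast_Suc_atMost) auto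
  also have "(\<Sum>i=Suc 1..Suc n. \<Prod>j=1..i. (if (b#x) ! (j - 1) then 1 else 0::nat)) =
     (\<Sum>i=1..n. \<Prod>j=1..Suc i. (if (b#x) ! (j - 1) then 1 else 0))"
    by (rule sum.shift_bounds_cl_Suc_ivl)
  also have "\<dots> = (\<Sum>i=1..n. (if b then 1 else 0) * (\<Prod>j=1..i. (if x ! (j - 1) then 1 else 0)))"
    by (rule sum.cong[OF refl P])
  finally show ?thesis by (simp only: leading_ones_def sum_distrib_left[symmetric]) simp
qed

lemma LO_eq: "length x = n \<Longrightarrow> leading_ones n x = lo x"
proof (induction x arbitrary: n)
  case Nil then show ?case by (simp add: leading_ones_def lo_def)
next
  case (Cons b x)
  then obtain m where "n = Suc m" "length x = m" by auto
  with Cons show ?case by (simp add: LO_Cons lo_def)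
qed

lemma lo_le: "lo x \<le> length x" by (simp add: lo_def length_takeWhile_le)

lemma lo_nth: "j < lo x \<Longrightarrow> x ! j"
  unfolding lo_def by (metis id_apply nth_mem set_takeWhileD takeWhile_nth)

lemma lo_nth_not: "lo x < length x \<Longrightarrow> \<not> x ! lo x"
  unfolding lo_def using nth_length_takeWhile[of id x] by simp

lemma lo_le_zero: "p < length x \<Longrightarrow> \<not> x ! p \<Longrightarrow> lo x \<le> p"
  using lo_nth[of p x] by (cases "p < lo x") auto

lemma lo_char: "m \<le> length x \<Longrightarrow> (\<forall>j<m. x ! j) \<Longrightarrow> (m < length x \<longrightarrow> \<not> x ! m) \<Longrightarrow> lo x = m"
proof -
  assume a: "m \<le> length x" "\<forall>j<m. x ! j" "m < length x \<longrightarrow> \<not> x ! m"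
  have "lo x \<le> m" using a lo_le_zero[of m x] by (cases "m < length x") (auto simp: lo_le)
  moreover have "m \<le> lo x"
  proof (rule ccontr)
    assume "\<not> m \<le> lo x"
    then have "lo x < m" by simp
    then have "lo x < length x" "x ! lo x" using a by auto
    then show False using lo_nth_not by blast
  qed
  ultimately show ?thesis by simp
qed

lemma length_flip[simp]: "length (flip_bit z p) = length z" by (simp add: flip_bit_def)

lemma flip_nth: "q < length z \<Longrightarrow> flip_bit z p ! q = (if q = p then \<not> z ! p else z ! q)"
  by (simp add: flip_bit_def nth_list_update)

lemma flip_flip[simp]: "flip_bit (flip_bit z p) p = z"
  by (cases "p < length z") (simp_all add: flip_bit_def list_update_beyond)

lemma flip_neq: "p < length z \<Longrightarrow> flip_bit z p \<noteq> z"
  by (metis flip_nth)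

lemma lo_flip_less: "p < lo x \<Longrightarrow> lo (flip_bit x p) = p"
  using lo_le[of x] by (intro lo_char) (auto simp: flip_nth lo_nth)

lemma lo_flip_gt: "lo x < p \<Longrightarrow> p < length x \<Longrightarrow> lo (flip_bit x p) = lo x"
  using lo_le[of x] lo_nth_not[of x] by (intro lo_char) (auto simp: flip_nth lo_nth)

lemma lo_flip_eq: "lo x < length x \<Longrightarrow> lo x < lo (flip_bit x (lo x))"
proof -
  assume a: "lo x < length x"
  let ?y = "flip_bit x (lo x)"
  have "\<forall>j<Suc (lo x). ?y ! j" using a lo_nth_not[OF a] by (auto simp: flip_nth lo_nth less_Suc_eq)
  then have "\<not> lo ?y < Suc (lo x)"
  proof (cases "lo ?y < length ?y")
    case True
    then show ?thesis using \<open>\<forall>j<Suc (lo x). ?y ! j\<close> lo_nth_not[of ?y] by auto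
  next
    case False
    then show ?thesis using a lo_le[of ?y] by auto
  qed
  then show ?thesis by simp
qed

lemma opt_iff: "length x = n \<Longrightarrow> (x = replicate n True) \<longleftrightarrow> lo x = n"
proof
  assume "length x = n" "x = replicate n True" then show "lo x = n" by (simp add: lo_def)
next
  assume a: "length x = n" "lo x = n"
  then have "\<forall>j<n. x ! j" using lo_nth by auto
  with a show "x = replicate n True" by (intro nth_equalityI) auto
qed

lemma hyp_stuck:
  assumes "length x = n" "p < lo x"
  shows "length z = n \<Longrightarrow> \<not> z ! p \<Longrightarrow> p \<notin> set ps \<Longrightarrow>
    \<exists>z'. hyp_fcm (leading_ones n) x z ps cnt = (z', cnt + length ps) \<and> length z' = n \<and> \<not> z' ! p"
proof (induction ps arbitrary: z cnt)
  case Nil then show ?case by simp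
next
  case (Cons q ps)
  let ?z = "flip_bit z q"
  have pn: "p < n" using assms lo_le[of x] by simp
  have l: "length ?z = n" "\<not> ?z ! p" using Cons.prems pn by (auto simp: flip_nth)
  have "leading_ones n ?z = lo ?z" using l by (simp add: LO_eq)
  also have "\<dots> \<le> p" using l pn by (intro lo_le_zero) auto
  finally have "\<not> leading_ones n x \<le> leading_ones n ?z" using assms by (simp add: LO_eq)
  then have "hyp_fcm (leading_ones n) x z (q # ps) cnt = hyp_fcm (leading_ones n) x ?z ps (Suc cnt)"
    by (simp add: Let_def)
  moreover have "\<exists>z'. hyp_fcm (leading_ones n) x ?z ps (Suc cnt) = (z', Suc cnt + length ps)
     \<and> length z' = n \<and> \<not> z' ! p" using Cons.IH[OF l, of "Suc cnt"] Cons.prems by simp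
  then obtain z' where "hyp_fcm (leading_ones n) x ?z ps (Suc cnt) = (z', Suc cnt + length ps)
     \<and> length z' = n \<and> \<not> z' ! p" by blast
  ultimately show ?case by auto
qed

definition R :: "nat \<Rightarrow> bool list \<Rightarrow> nat \<Rightarrow> bool list \<times> nat" where
  "R M x q = (if q < lo x then (x, M) else (flip_bit x q, 1))"

lemma step_result:
  assumes "length x = n" "lo x < n" "1 \<le> M" "M \<le> n" "distinct (q # rest)" "set (q # rest) = {0..<n}"
  shows "(\<lambda>(y, c). (if leading_ones n y \<ge> leading_ones n x then y else x, c))
            (hyp_fcm (leading_ones n) x x (take M (q # rest)) 0) = R M x q"
proof -
  obtain M' where M': "M = Suc M'" using assms by (cases M) auto
  have qn: "q < n" using assms by auto
  have lenrest: "length rest = n - 1" using assms distinct_card[of "q#rest"] by auto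
  show ?thesis
  proof (cases "q < lo x")
    case True
    let ?z = "flip_bit x q"
    have l: "length ?z = n" "\<not> ?z ! q" using assms True qn by (auto simp: flip_nth lo_nth)
    have lz: "leading_ones n ?z = q" using l True by (simp add: LO_eq lo_flip_less)
    have lx: "leading_ones n x = lo x" using assms by (simp add: LO_eq)
    have "q \<notin> set (take M' rest)" using assms by (auto dest: in_set_takeD)
    then obtain z' where z': "hyp_fcm (leading_ones n) x ?z (take M' rest) 1 = (z', 1 + length (take M' rest))
       \<and> length z' = n \<and> \<not> z' ! q"
      using hyp_stuck[OF assms(1) True l] by blast
    have "leading_ones n z' \<le> q" using z' qn by (simp add: LO_eq lo_le_zero)
    then have "\<not> leading_ones n x \<le> leading_ones n z'" using lx True by simp
    moreover have "1 + length (take M' rest) = M" using M' lenrest assms by auto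
    ultimately show ?thesis using True z' lz lx M' by (simp add: R_def Let_def)
  next
    case False
    have "leading_ones n (flip_bit x q) \<ge> leading_ones n x"
    proof (cases "q = lo x")
      case True then show ?thesis using assms lo_flip_eq[of x] by (simp add: LO_eq)
    next
      case False
      then have "lo x < q" using \<open>\<not> q < lo x\<close> by simp
      then show ?thesis using assms qn by (simp add: LO_eq lo_flip_gt)
    qed
    then show ?thesis using False M' by (simp add: R_def Let_def)
  qed
qed

lemma ia_step_eq:
  assumes "length x = n" "lo x < n" "1 \<le> M" "M \<le> n"
  shows "ia_step n M (leading_ones n) x = map_pmf (R M x) (pmf_of_set {0..<n})"
proof -
  have ne: "{0..<n} \<noteq> {}" using assms by auto
  have "ia_step n M (leading_ones n) x =
     map_pmf (\<lambda>ps. (\<lambda>(y, c). (if leading_ones n y \<ge> leading_ones n x then y else x, c))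
            (hyp_fcm (leading_ones n) x x (take M ps) 0)) (pmf_of_set (permutations_of_set {0..<n}))"
    by (simp add: ia_step_def hypermutation_def pmf.map_comp o_def)
  also have "\<dots> = do { q \<leftarrow> pmf_of_set {0..<n};
        rest \<leftarrow> pmf_of_set (permutations_of_set ({0..<n} - {q}));
        return_pmf (R M x q) }"
    unfolding random_permutation_of_set[OF finite_atLeastLessThan ne] map_bind_pmf map_return_pmf
    apply (intro bind_pmf_cong refl)
    apply (subst step_result[OF assms])
    using ne
    by (auto simp: set_pmf_of_set permutations_of_set_def[symmetric] dest: permutations_of_setD)
  also have "\<dots> = map_pmf (R M x) (pmf_of_set {0..<n})"
    by (simp add: bind_pmf_const map_pmf_def)
  finally show ?thesis .
qed

lemma K_pmf:
  assumes "length x = n" "lo x < n" "1 \<le> M" "M \<le> n"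
  shows "pmf (map_pmf fst (ia_step n M (leading_ones n) x)) y =
           (\<Sum>q<n. if fst (R M x q) = y then 1 else 0) / real n"
proof -
  have "pmf (map_pmf fst (ia_step n M (leading_ones n) x)) y =
        measure (pmf_of_set {0..<n}) ((fst \<circ> R M x) -` {y})"
    by (simp add: ia_step_eq[OF assms] pmf.map_comp pmf_map)
  also have "\<dots> = real (card ({0..<n} \<inter> (fst \<circ> R M x) -` {y})) / real n"
    using assms by (subst measure_pmf_of_set) auto
  also have "card ({0..<n} \<inter> (fst \<circ> R M x) -` {y}) = card {q\<in>{..<n}. fst (R M x q) = y}"
    by (rule arg_cong[where f=card]) auto
  also have "real \<dots> = (\<Sum>q\<in>{q\<in>{..<n}. fst (R M x q) = y}. 1)" by simp
  also have "\<dots> = (\<Sum>q<n. if fst (R M x q) = y then 1 else 0)"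
    by (subst sum.inter_filter) auto
  finally show ?thesis .
qed

lemma fstR: "fst (R M x q) = (if q < lo x then x else flip_bit x q)"
  by (simp add: R_def)

lemma flip_eq_iff: "(flip_bit x q = y) = (x = flip_bit y q)"
  by (metis flip_flip)

lemma pre_char:
  assumes "length y = n" "lo y < n" "q < n"
  shows "{x. length x = n \<and> x \<noteq> replicate n True \<and> fst (R M x q) = y} =
    (if q < lo y then {y, flip_bit y q} else if q = lo y then {} else {flip_bit y q})"
proof (intro set_eqI iffI)
  fix x assume x: "x \<in> {x. length x = n \<and> x \<noteq> replicate n True \<and> fst (R M x q) = y}"
  show "x \<in> (if q < lo y then {y, flip_bit y q} else if q = lo y then {} else {flip_bit y q})"
  proof (cases "q < lo x")
    case True then show ?thesis using x by (auto simp: fstR)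
  next
    case False
    then have xe: "x = flip_bit y q" using x by (auto simp: fstR flip_eq_iff)
    have "q \<noteq> lo y"
    proof
      assume "q = lo y"
      then have "q < lo x" using xe lo_flip_eq[of y] assms by simp
      then show False using False by simp
    qed
    then show ?thesis using xe by auto
  qed
next
  fix x assume x: "x \<in> (if q < lo y then {y, flip_bit y q} else if q = lo y then {} else {flip_bit y q})"
  have yn: "y \<noteq> replicate n True" using assms opt_iff[of y n] by simp
  show "x \<in> {x. length x = n \<and> x \<noteq> replicate n True \<and> fst (R M x q) = y}"
  proof (cases "q < lo y")
    case True
    have "lo (flip_bit y q) = q" using True by (simp add: lo_flip_less)
    moreover have "flip_bit y q \<noteq> replicate n True" using calculation assms opt_iff[of "flip_bit y q" n] by simp
    ultimately show ?thesis using x True assms yn by (auto simp: fstR)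
  next
    case False
    then have g: "lo y < q" using x by (auto split: if_splits)
    then have "lo (flip_bit y q) = lo y" using assms by (simp add: lo_flip_gt)
    moreover have "flip_bit y q \<noteq> replicate n True" using calculation assms opt_iff[of "flip_bit y q" n] by simp
    ultimately show ?thesis using x False g assms by (auto simp: fstR)
  qed
qed

fun phi :: "nat \<Rightarrow> nat \<Rightarrow> nat \<Rightarrow> real" where
  "phi n 0 m = 1 / 2 ^ n"
| "phi n (Suc k) m = (1 - 1 / real n) * phi n k m + (1 / real n) * (\<Sum>l<m. phi n k l)"

lemma set_state:
  assumes "1 \<le> M" "M \<le> n"
  shows "set_pmf (ia_state n M (leading_ones n) k) \<subseteq> {x. length x = n}"
proof (induction k)
  case 0
  have "finite {x::bool list. length x = n}" using finite_lists_length_eq[of "UNIV::bool set" n] by simp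
  moreover have "{x::bool list. length x = n} \<noteq> {}" by (auto intro: exI[of _ "replicate n True"])
  ultimately show ?case by simp
next
  case (Suc k)
  show ?case
  proof
    fix z assume "z \<in> set_pmf (ia_state n M (leading_ones n) (Suc k))"
    then obtain x where x: "x \<in> set_pmf (ia_state n M (leading_ones n) k)"
      and z: "z \<in> set_pmf (if x = replicate n True then return_pmf x else map_pmf fst (ia_step n M (leading_ones n) x))"
      by auto
    have lx: "length x = n" using x Suc by auto
    show "z \<in> {x. length x = n}"
    proof (cases "x = replicate n True")
      case True then show ?thesis using z by simp
    next
      case False
      then have "lo x < n" using lx opt_iff[of x n] lo_le[of x] by simp
      then show ?thesis using z lx False assms by (auto simp: ia_step_eq R_def)
    qed
  qed
qed

lemma card_L: "card {x::bool list. length x = n} = 2 ^ n"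
  using card_lists_length_eq[of "UNIV::bool set" n] by simp

lemma finite_L: "finite {x::bool list. length x = n}"
  using finite_lists_length_eq[of "UNIV::bool set" n] by simp

lemma L_ne: "{x::bool list. length x = n} \<noteq> {}"
  by (auto intro: exI[of _ "replicate n True"])

lemma pmf_state:
  assumes "1 \<le> M" "M \<le> n"
  shows "length y = n \<Longrightarrow> lo y < n \<Longrightarrow> pmf (ia_state n M (leading_ones n) k) y = phi n k (lo y)"
proof (induction k arbitrary: y)
  case 0
  then show ?case by (simp only: ia_state.simps phi.simps pmf_of_set[OF L_ne finite_L]) (simp add: card_L)
next
  case (Suc k)
  define \<mu> where "\<mu> = ia_state n M (leading_ones n) k"
  define L where "L = {x::bool list. length x = n}"
  define opt where "opt = replicate n True"
  define m where "m = lo y"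
  define K where "K = (\<lambda>x. if x = opt then return_pmf x else map_pmf fst (ia_step n M (leading_ones n) x))"
  define P where "P = (\<lambda>q x. x \<noteq> opt \<and> fst (R M x q) = y)"
  have yopt: "y \<noteq> opt" using Suc.prems opt_iff[of y n] by (simp add: opt_def)
  have fL: "finite L" by (simp add: L_def finite_L)
  have sup: "set_pmf \<mu> \<subseteq> L" using set_state[OF assms] by (simp add: \<mu>_def L_def)
  have "pmf (ia_state n M (leading_ones n) (Suc k)) y = (\<integral>x. pmf (K x) y \<partial>\<mu>)"
    by (simp add: pmf_bind \<mu>_def K_def opt_def)
  also have "\<dots> = (\<Sum>x\<in>L. pmf \<mu> x * pmf (K x) y)"
    using sup by (subst integral_measure_pmf[OF fL]) auto
  also have "\<dots> = (\<Sum>x\<in>L. pmf \<mu> x * ((\<Sum>q<n. if P q x then 1 else 0) / real n))"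
  proof (rule sum.cong[OF refl])
    fix x assume "x \<in> L"
    then have lx: "length x = n" by (simp add: L_def)
    show "pmf \<mu> x * pmf (K x) y = pmf \<mu> x * ((\<Sum>q<n. if P q x then 1 else 0) / real n)"
    proof (cases "x = opt")
      case True then show ?thesis using yopt by (simp add: K_def P_def)
    next
      case False
      then have "lo x < n" using lx opt_iff[of x n] lo_le[of x] by (simp add: opt_def)
      then show ?thesis using False by (simp add: K_def P_def K_pmf[OF lx _ assms])
    qed
  qed
  also have "\<dots> = (\<Sum>q<n. (\<Sum>x\<in>L. if P q x then pmf \<mu> x else 0)) / real n"
  proof -
    have "pmf \<mu> x * ((\<Sum>q<n. if P q x then 1 else 0) / real n) =
          (\<Sum>q<n. if P q x then pmf \<mu> x else 0) / real n" for x
      by (simp add: sum_distrib_left if_distrib cong: if_cong)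
    then have "(\<Sum>x\<in>L. pmf \<mu> x * ((\<Sum>q<n. if P q x then 1 else 0) / real n)) =
         (\<Sum>x\<in>L. \<Sum>q<n. if P q x then pmf \<mu> x else 0) / real n"
      by (simp add: sum_divide_distrib)
    also have "\<dots> = (\<Sum>q<n. (\<Sum>x\<in>L. if P q x then pmf \<mu> x else 0)) / real n"
      by (subst sum.swap) simp
    finally show ?thesis .
  qed
  also have "\<dots> = (\<Sum>q<n. if q < m then phi n k m + phi n k q else if q = m then 0 else phi n k m) / real n"
  proof (rule arg_cong2[where f="(/)"], rule sum.cong[OF refl], goal_cases)
    case (1 q)
    then have qn: "q < n" by simp
    have "(\<Sum>x\<in>L. if P q x then pmf \<mu> x else 0) = (\<Sum>x\<in>{x\<in>L. P q x}. pmf \<mu> x)"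
      by (simp add: sum.inter_filter fL)
    also have "{x\<in>L. P q x} = (if q < m then {y, flip_bit y q} else if q = m then {} else {flip_bit y q})"
      using pre_char[OF Suc.prems qn, of M] by (simp add: L_def P_def opt_def m_def)
    also have "(\<Sum>x\<in>\<dots>. pmf \<mu> x) = (if q < m then phi n k m + phi n k q else if q = m then 0 else phi n k m)"
    proof -
      have py: "pmf \<mu> y = phi n k m" using Suc.IH[OF Suc.prems] by (simp add: \<mu>_def m_def)
      have fl: "length (flip_bit y q) = n" using Suc.prems by simp
      show ?thesis
      proof (cases "q < m")
        case True
        have "lo (flip_bit y q) = q" using True by (simp add: m_def lo_flip_less)
        then have "pmf \<mu> (flip_bit y q) = phi n k q" using Suc.IH[OF fl] qn by (simp add: \<mu>_def)
        moreover have "y \<noteq> flip_bit y q" using flip_neq[of q y] qn Suc.prems by auto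
        ultimately show ?thesis using True py by simp
      next
        case False
        show ?thesis
        proof (cases "q = m")
          case True then show ?thesis by simp
        next
          case False2: False
          then have "m < q" using False by simp
          then have "lo (flip_bit y q) = m" using qn Suc.prems by (simp add: m_def lo_flip_gt)
          then have "pmf \<mu> (flip_bit y q) = phi n k m" using Suc.IH[OF fl] Suc.prems by (simp add: \<mu>_def m_def)
          then show ?thesis using False False2 by simp
        qed
      qed
    qed
    finally show ?case .
  qed simp
  also have "\<dots> = phi n (Suc k) m"
  proof -
    have mn: "m < n" using Suc.prems by (simp add: m_def)
    have "(\<Sum>q<n. if q < m then phi n k m + phi n k q else if q = m then 0 else phi n k m) =
          (\<Sum>q<n. (if q < m then phi n k q else 0)) + (\<Sum>q<n. (if q = m then 0 else phi n k m))"
      by (subst sum.distrib[symmetric]) (rule sum.cong, auto)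
    also have "(\<Sum>q<n. (if q < m then phi n k q else 0)) = (\<Sum>q<m. phi n k q)"
      using mn by (subst sum.inter_filter[symmetric]) (auto intro: sum.cong)
    also have "(\<Sum>q<n. (if q = m then 0 else phi n k m)) = real (n - 1) * phi n k m"
    proof -
      have "(\<Sum>q<n. (if q = m then 0 else phi n k m)) = (\<Sum>q\<in>{..<n} - {m}. phi n k m)"
        by (simp add: sum.If_cases Diff_eq)
      also have "\<dots> = real (n - 1) * phi n k m" using mn by simp
      finally show ?thesis .
    qed
    finally show ?thesis using mn by (simp add: field_simps of_nat_diff)
  qed
  finally show ?case by (simp add: m_def)
qed

definition w :: "nat \<Rightarrow> nat \<Rightarrow> nat \<Rightarrow> real" where
  "w n M l = real l * real M + real (n - l)"

lemma w_nonneg: "0 \<le> w n M l" by (simp add: w_def)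

lemma phi_nonneg: "0 \<le> phi n k m"
proof (induction k arbitrary: m)
  case 0 then show ?case by simp
next
  case (Suc k)
  have "0 \<le> 1 - 1 / real n" by (cases n) (auto simp: field_simps)
  then show ?case using Suc by (auto intro!: add_nonneg_nonneg mult_nonneg_nonneg sum_nonneg divide_nonneg_nonneg)
qed

lemma inner_cost:
  assumes "length x = n" "lo x < n" "1 \<le> M" "M \<le> n"
  shows "(\<integral>\<^sup>+yc. ennreal (real (snd yc)) \<partial>measure_pmf (ia_step n M (leading_ones n) x)) = ennreal (w n M (lo x) / n)"
proof -
  have n0: "0 < n" using assms by simp
  have "(\<integral>\<^sup>+yc. ennreal (real (snd yc)) \<partial>measure_pmf (ia_step n M (leading_ones n) x)) =
        (\<Sum>q\<in>{0..<n}. ennreal (real (snd (R M x q)))) / of_nat (card {0..<n})"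
    using n0 by (simp add: ia_step_eq[OF assms] nn_integral_pmf_of_set)
  also have "(\<Sum>q\<in>{0..<n}. real (snd (R M x q))) = w n M (lo x)"
  proof -
    have "(\<Sum>q\<in>{0..<n}. real (snd (R M x q))) = (\<Sum>q\<in>{0..<n}. if q < lo x then real M else 1)"
      by (rule sum.cong) (auto simp: R_def)
    also have "\<dots> = (\<Sum>q\<in>{0..<lo x}. real M) + (\<Sum>q\<in>{lo x..<n}. 1)"
    proof -
      have "{0..<n} \<inter> {q. q < lo x} = {0..<lo x}" "{0..<n} \<inter> - {q. q < lo x} = {lo x..<n}"
        using assms by auto
      then show ?thesis by (simp add: sum.If_cases)
    qed
    also have "\<dots> = w n M (lo x)" by (simp add: w_def)
    finally show ?thesis .
  qed
  then have "(\<Sum>q\<in>{0..<n}. ennreal (real (snd (R M x q)))) = ennreal (w n M (lo x))"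
    by (subst sum_ennreal) auto
  also have "of_nat (card {0..<n}) = ennreal (real n)"
    by (simp add: ennreal_of_nat_eq_real_of_nat)
  finally show ?thesis using n0 by (simp add: divide_ennreal w_nonneg)
qed

lemma lo_append: "lo (replicate m True @ False # s) = m"
  by (induction m) (auto simp: lo_def)

lemma level_count:
  assumes "m < n"
  shows "card {x::bool list. length x = n \<and> lo x = m} = 2 ^ (n - Suc m)"
proof -
  have "{x::bool list. length x = n \<and> lo x = m} =
        (\<lambda>s. replicate m True @ False # s) ` {s. length s = n - Suc m}"
  proof (intro set_eqI iffI)
    fix x assume x: "x \<in> {x::bool list. length x = n \<and> lo x = m}"
    then have "x = replicate m True @ False # drop (Suc m) x"
      using assms lo_nth[of _ x] lo_nth_not[of x]
      by (intro nth_equalityI) (auto simp: nth_append nth_Cons' less_Suc_eq)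
    then show "x \<in> (\<lambda>s. replicate m True @ False # s) ` {s. length s = n - Suc m}"
      using x by (intro image_eqI[where x="drop (Suc m) x"]) auto
  next
    fix x assume "x \<in> (\<lambda>s. replicate m True @ False # s) ` {s. length s = n - Suc m}"
    then show "x \<in> {x::bool list. length x = n \<and> lo x = m}" using assms by (auto simp: lo_append)
  qed
  also have "card \<dots> = card {s::bool list. length s = n - Suc m}"
    by (rule card_image) (auto simp: inj_on_def)
  also have "\<dots> = 2 ^ (n - Suc m)" by (rule card_L)
  finally show ?thesis .
qed

lemma group_levels:
  fixes F :: "nat \<Rightarrow> real"
  shows "(\<Sum>x\<in>{x::bool list. length x = n \<and> x \<noteq> replicate n True}. F (lo x)) =
         (\<Sum>m<n. 2 ^ (n - Suc m) * F m)"
proof -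
  let ?S = "{x::bool list. length x = n \<and> x \<noteq> replicate n True}"
  have fS: "finite ?S" by (rule finite_subset[OF _ finite_L[of n]]) auto
  have im: "lo ` ?S \<subseteq> {..<n}"
  proof
    fix m assume "m \<in> lo ` ?S"
    then obtain x where "x \<in> ?S" "m = lo x" by auto
    then show "m \<in> {..<n}" using opt_iff[of x n] lo_le[of x] by auto
  qed
  have "(\<Sum>x\<in>?S. F (lo x)) = (\<Sum>m<n. \<Sum>x\<in>{x. x \<in> ?S \<and> lo x = m}. F (lo x))"
    by (rule sum.group[OF fS _ im, symmetric]) simp
  also have "\<dots> = (\<Sum>m<n. 2 ^ (n - Suc m) * F m)"
  proof (rule sum.cong[OF refl])
    fix m assume "m \<in> {..<n}"
    then have mn: "m < n" by simp
    have "{x. x \<in> ?S \<and> lo x = m} = {x::bool list. length x = n \<and> lo x = m}"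
      using mn opt_iff by auto
    then show "(\<Sum>x\<in>{x. x \<in> ?S \<and> lo x = m}. F (lo x)) = 2 ^ (n - Suc m) * F m"
      using level_count[OF mn] by simp
  qed
  finally show ?thesis .
qed

definition a :: "nat \<Rightarrow> nat \<Rightarrow> nat \<Rightarrow> real" where
  "a n M k = (\<Sum>m<n. 2 ^ (n - Suc m) * (phi n k m * (w n M m / real n)))"

lemma term_eq:
  assumes "1 \<le> M" "M \<le> n"
  shows "(\<integral>\<^sup>+ x. (if x = replicate n True then 0
                       else \<integral>\<^sup>+ yc. ennreal (real (snd yc)) \<partial>measure_pmf (ia_step n M (leading_ones n) x))
                  \<partial>measure_pmf (ia_state n M (leading_ones n) k)) = ennreal (a n M k)"
proof -
  let ?L = "{x::bool list. length x = n}"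
  let ?S = "{x::bool list. length x = n \<and> x \<noteq> replicate n True}"
  let ?G = "\<lambda>x. if x = replicate n True then 0 else phi n k (lo x) * (w n M (lo x) / real n)"
  have wnn: "0 \<le> w n M l" for l by (simp add: w_def)
  have "(\<integral>\<^sup>+ x. (if x = replicate n True then 0
                       else \<integral>\<^sup>+ yc. ennreal (real (snd yc)) \<partial>measure_pmf (ia_step n M (leading_ones n) x))
                  \<partial>measure_pmf (ia_state n M (leading_ones n) k)) =
        (\<Sum>x\<in>?L. (if x = replicate n True then 0
                       else \<integral>\<^sup>+ yc. ennreal (real (snd yc)) \<partial>measure_pmf (ia_step n M (leading_ones n) x))
              * pmf (ia_state n M (leading_ones n) k) x)"
    using set_state[OF assms, of k] by (intro nn_integral_measure_pmf_support finite_L) auto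
  also have "\<dots> = (\<Sum>x\<in>?L. ennreal (?G x))"
  proof (rule sum.cong[OF refl])
    fix x assume "x \<in> ?L"
    then have lx: "length x = n" by simp
    show "(if x = replicate n True then 0
                       else \<integral>\<^sup>+ yc. ennreal (real (snd yc)) \<partial>measure_pmf (ia_step n M (leading_ones n) x))
              * pmf (ia_state n M (leading_ones n) k) x = ennreal (?G x)"
    proof (cases "x = replicate n True")
      case True then show ?thesis by simp
    next
      case False
      then have "lo x < n" using lx opt_iff[of x n] lo_le[of x] by simp
      have "ennreal (phi n k (lo x)) * ennreal (w n M (lo x) / real n) = ennreal (phi n k (lo x) * (w n M (lo x) / real n))"
        by (rule ennreal_mult[symmetric]) (auto simp: phi_nonneg w_nonneg)
      then show ?thesis using False inner_cost[OF lx _ assms] pmf_state[OF assms lx] \<open>lo x < n\<close>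
        by (simp add: mult.commute)
    qed
  qed
  also have "\<dots> = ennreal (\<Sum>x\<in>?L. ?G x)"
    by (rule sum_ennreal) (auto intro!: mult_nonneg_nonneg phi_nonneg divide_nonneg_nonneg w_nonneg)
  also have "(\<Sum>x\<in>?L. ?G x) = (\<Sum>x\<in>?S. phi n k (lo x) * (w n M (lo x) / real n))"
    by (simp add: sum.If_cases finite_L Collect_conj_eq[symmetric] Int_def)
  also have "\<dots> = a n M k"
    unfolding a_def by (rule group_levels[where F="\<lambda>l. phi n k l * (w n M l / real n)"])
  finally show ?thesis .
qed

definition WW :: "nat \<Rightarrow> nat \<Rightarrow> nat \<Rightarrow> real" where
  "WW n M l = (\<Sum>i\<in>{l..<n}. w n M i)"

definition hh :: "nat \<Rightarrow> nat \<Rightarrow> nat \<Rightarrow> real" where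
  "hh n M l = 2 ^ (n - l) * (w n M l + WW n M l) / 4"

definition HH :: "nat \<Rightarrow> nat \<Rightarrow> nat \<Rightarrow> real" where
  "HH n M k = (\<Sum>m<n. phi n k m * hh n M m)"

lemma WW_Suc: "l < n \<Longrightarrow> WW n M l = w n M l + WW n M (Suc l)"
  unfolding WW_def by (simp add: sum.atLeast_Suc_lessThan)

lemma pow_Suc_diff: "l < n \<Longrightarrow> (2::real) ^ (n - l) = 2 * 2 ^ (n - Suc l)"
  by (metis Suc_diff_Suc power_Suc)

lemma hh_tail: "l \<le> n \<Longrightarrow> (\<Sum>m\<in>{l..<n}. hh n M m) = 2 ^ (n - l) * WW n M l / 2"
proof (induction l rule: inc_induct)
  case base then show ?case by (simp add: WW_def)
next
  case (step l)
  have "(\<Sum>m\<in>{l..<n}. hh n M m) = hh n M l + (\<Sum>m\<in>{Suc l..<n}. hh n M m)"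
    using step by (simp add: sum.atLeast_Suc_lessThan)
  also have "\<dots> = 2 ^ (n - l) * WW n M l / 2"
    using step by (simp add: hh_def WW_Suc[of l n M] pow_Suc_diff[of l n] field_simps)
  finally show ?case .
qed

lemma hh_drift: "l < n \<Longrightarrow> hh n M l - (\<Sum>m\<in>{Suc l..<n}. hh n M m) = 2 ^ (n - Suc l) * w n M l"
  using hh_tail[of "Suc l" n M]
  by (simp add: hh_def WW_Suc[of l n M] pow_Suc_diff[of l n] field_simps)

lemma tri_swap: "(\<Sum>m<n. \<Sum>l<m. f l m) = (\<Sum>l<n. \<Sum>m\<in>{Suc l..<n}. (f l m :: real))"
proof (induction n)
  case 0 then show ?case by simp
next
  case (Suc n)
  have "(\<Sum>l<Suc n. \<Sum>m\<in>{Suc l..<Suc n}. f l m) = (\<Sum>l<n. \<Sum>m\<in>{Suc l..<Suc n}. f l m)"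
    by simp
  also have "\<dots> = (\<Sum>l<n. (\<Sum>m\<in>{Suc l..<n}. f l m) + f l n)"
    by (rule sum.cong[OF refl]) simp
  finally show ?case using Suc by (simp add: sum.distrib)
qed

lemma drift:
  assumes "0 < n"
  shows "HH n M k - HH n M (Suc k) = a n M k"
proof -
  have "HH n M k - HH n M (Suc k) =
        (1 / real n) * ((\<Sum>m<n. phi n k m * hh n M m) - (\<Sum>m<n. \<Sum>l<m. phi n k l * hh n M m))"
    by (simp add: HH_def algebra_simps sum_subtractf[symmetric] sum_distrib_left sum_distrib_right
        sum_divide_distrib)
  also have "(\<Sum>m<n. \<Sum>l<m. phi n k l * hh n M m) = (\<Sum>l<n. phi n k l * (\<Sum>m\<in>{Suc l..<n}. hh n M m))"
    by (subst tri_swap) (simp add: sum_distrib_left)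
  also have "(\<Sum>m<n. phi n k m * hh n M m) - \<dots> = (\<Sum>l<n. phi n k l * (2 ^ (n - Suc l) * w n M l))"
    by (simp add: sum_subtractf[symmetric] right_diff_distrib[symmetric] hh_drift)
  also have "(1 / real n) * \<dots> = a n M k"
    by (simp add: a_def sum_distrib_left mult_ac)
  finally show ?thesis .
qed

definition ss :: "nat \<Rightarrow> nat \<Rightarrow> real" where
  "ss n k = (\<Sum>m<n. 2 ^ (n - Suc m) * phi n k m)"

lemma ss_le1:
  assumes "1 \<le> M" "M \<le> n"
  shows "ss n k \<le> 1"
proof -
  let ?S = "{x::bool list. length x = n \<and> x \<noteq> replicate n True}"
  let ?\<mu> = "ia_state n M (leading_ones n) k"
  have fS: "finite ?S" by (rule finite_subset[OF _ finite_L[of n]]) auto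
  have "ss n k = (\<Sum>x\<in>?S. phi n k (lo x))"
    by (simp add: ss_def group_levels)
  also have "\<dots> = (\<Sum>x\<in>?S. pmf ?\<mu> x)"
  proof (rule sum.cong[OF refl])
    fix x assume x: "x \<in> ?S"
    then have "lo x < n" using opt_iff[of x n] lo_le[of x] by auto
    then show "phi n k (lo x) = pmf ?\<mu> x" using pmf_state[OF assms] x by simp
  qed
  also have "\<dots> = measure (measure_pmf ?\<mu>) ?S" by (simp add: measure_measure_pmf_finite fS)
  also have "\<dots> \<le> 1" by (rule measure_pmf.prob_le_1)
  finally show ?thesis .
qed

lemma w_ge: "1 \<le> M \<Longrightarrow> l \<le> n \<Longrightarrow> real n \<le> w n M l"
proof -
  assume "1 \<le> M" "l \<le> n"
  then have "real l \<le> real l * real M" using mult_left_mono[of 1 "real M" "real l"] by simp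
  then show ?thesis using \<open>l \<le> n\<close> by (simp add: w_def of_nat_diff)
qed

lemma w_le: "M \<le> n \<Longrightarrow> l < n \<Longrightarrow> w n M l \<le> real n ^ 2"
proof -
  assume a: "M \<le> n" "l < n"
  have "real l * real M \<le> real l * real n" using a by (simp add: mult_left_mono)
  moreover have "(real n - real l) * (1 - real n) \<le> 0"
    using a by (intro mult_nonneg_nonpos) auto
  ultimately show ?thesis using a by (simp add: w_def of_nat_diff power2_eq_square algebra_simps)
qed

lemma ss_le_a:
  assumes "1 \<le> M" "0 < n"
  shows "ss n k \<le> a n M k"
  unfolding ss_def a_def
proof (rule sum_mono)
  fix m assume "m \<in> {..<n}"
  then have "1 \<le> w n M m / real n" using w_ge[OF assms(1), of m n] assms by simp
  then have "phi n k m * 1 \<le> phi n k m * (w n M m / real n)"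
    using phi_nonneg[of n k m] by (rule mult_left_mono)
  then have "phi n k m \<le> phi n k m * (w n M m / real n)" by simp
  then show "2 ^ (n - Suc m) * phi n k m \<le> 2 ^ (n - Suc m) * (phi n k m * (w n M m / real n))"
    by (rule mult_left_mono) simp
qed

lemma hh_le:
  assumes "M \<le> n" "m < n"
  shows "hh n M m \<le> real n ^ 3 * 2 ^ (n - Suc m)"
proof -
  have "WW n M m \<le> real (card {m..<n}) * real n ^ 2"
    unfolding WW_def by (rule sum_bounded_above) (use assms w_le in auto)
  also have "\<dots> \<le> real n * real n ^ 2" by (intro mult_right_mono) auto
  finally have W: "WW n M m \<le> real n ^ 3" by (simp add: power3_eq_cube power2_eq_square)
  have "real n ^ 2 \<le> real n ^ 3" using assms
    by (simp add: power_increasing)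
  then have "w n M m + WW n M m \<le> 2 * real n ^ 3" using W w_le[OF assms] by simp
  moreover have "(2::real) ^ (n - m) = 2 * 2 ^ (n - Suc m)" using pow_Suc_diff assms by simp
  ultimately have "(w n M m + WW n M m) * (2 * 2 ^ (n - Suc m)) \<le> (2 * real n ^ 3) * (2 * 2 ^ (n - Suc m))"
    by (intro mult_right_mono) auto
  then show ?thesis unfolding hh_def using \<open>(2::real) ^ (n - m) = 2 * 2 ^ (n - Suc m)\<close>
    by (simp add: field_simps)
qed

lemma hh_nonneg: "0 \<le> hh n M m"
  by (simp add: hh_def WW_def w_nonneg sum_nonneg)

lemma HH_nonneg: "0 \<le> HH n M k"
  by (simp add: HH_def sum_nonneg phi_nonneg hh_nonneg)

lemma HH_le:
  assumes "M \<le> n"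
  shows "HH n M k \<le> real n ^ 3 * ss n k"
  unfolding HH_def ss_def sum_distrib_left
proof (rule sum_mono)
  fix m assume "m \<in> {..<n}"
  then have "hh n M m \<le> real n ^ 3 * 2 ^ (n - Suc m)" using hh_le assms by simp
  then have "phi n k m * hh n M m \<le> phi n k m * (real n ^ 3 * 2 ^ (n - Suc m))"
    by (rule mult_left_mono) (rule phi_nonneg)
  then show "phi n k m * hh n M m \<le> real n ^ 3 * (2 ^ (n - Suc m) * phi n k m)"
    by (simp add: mult_ac)
qed

lemma gauss_real: "(\<Sum>i<n. real i) = real n * (real n - 1) / 2"
  by (induction n) (simp_all add: field_simps)

lemma HH0_ge:
  assumes "0 < n"
  shows "real M * real n * (real n - 1) / 8 \<le> HH n M 0"
proof -
  have "(\<Sum>i<n. real i * real M) \<le> WW n M 0"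
    unfolding WW_def atLeast0LessThan by (rule sum_mono) (simp add: w_def)
  then have W: "real M * (real n * (real n - 1) / 2) \<le> WW n M 0"
    by (simp add: sum_distrib_right[symmetric] gauss_real mult.commute)
  have "phi n 0 0 * hh n M 0 \<le> HH n M 0"
    unfolding HH_def using assms
    by (intro member_le_sum[of 0 "{..<n}" "\<lambda>m. phi n 0 m * hh n M m"]) (auto intro!: divide_nonneg_nonneg mult_nonneg_nonneg phi_nonneg hh_nonneg)
  moreover have "phi n 0 0 * hh n M 0 = (w n M 0 + WW n M 0) / 4"
    by (simp add: hh_def)
  moreover have "0 \<le> w n M 0" by (rule w_nonneg)
  ultimately show ?thesis using W by simp
qed

lemma a_nonneg: "0 \<le> a n M k"
  by (simp add: a_def sum_nonneg phi_nonneg w_nonneg)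

lemma runtime_eq:
  assumes "1 \<le> M" "M \<le> n"
  shows "ia_expected_runtime n M (leading_ones n) = 1 + ennreal (HH n M 0)"
proof -
  have n0: "0 < n" using assms by simp
  have part: "(\<Sum>k<K. a n M k) = HH n M 0 - HH n M K" for K
  proof (induction K)
    case 0 then show ?case by simp
  next
    case (Suc K) then show ?case using drift[OF n0, of M K] by simp
  qed
  have summ: "summable (a n M)"
  proof (rule summableI_nonneg_bounded)
    show "0 \<le> a n M k" for k by (rule a_nonneg)
    show "sum (a n M) {..<K} \<le> HH n M 0" for K using part[of K] HH_nonneg[of n M K] by simp
  qed
  have a0: "a n M \<longlonglongrightarrow> 0" by (rule summable_LIMSEQ_zero[OF summ])
  have up: "(\<lambda>K. real n ^ 3 * a n M K) \<longlonglongrightarrow> 0"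
    using tendsto_mult[OF tendsto_const a0, of "real n ^ 3"] by simp
  have H0: "(\<lambda>K. HH n M K) \<longlonglongrightarrow> 0"
  proof (rule tendsto_sandwich[of "\<lambda>_. 0" _ _ "\<lambda>K. real n ^ 3 * a n M K"])
    show "\<forall>\<^sub>F K in sequentially. 0 \<le> HH n M K" by (simp add: HH_nonneg)
    show "\<forall>\<^sub>F K in sequentially. HH n M K \<le> real n ^ 3 * a n M K"
    proof (rule always_eventually, rule allI)
      fix K
      have "HH n M K \<le> real n ^ 3 * ss n K" using HH_le[OF assms(2)] .
      also have "\<dots> \<le> real n ^ 3 * a n M K" using ss_le_a[OF assms(1) n0] by (simp add: mult_left_mono)
      finally show "HH n M K \<le> real n ^ 3 * a n M K" .
    qed
  qed (simp_all add: up)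
  have "a n M sums HH n M 0"
    unfolding sums_def part using tendsto_diff[OF tendsto_const H0, of "HH n M 0"] by simp
  then have si: "suminf (a n M) = HH n M 0" by (rule sums_unique[symmetric])
  have "ia_expected_runtime n M (leading_ones n) = 1 + (\<Sum>k. ennreal (a n M k))"
    by (simp add: ia_expected_runtime_def term_eq[OF assms])
  also have "(\<Sum>k. ennreal (a n M k)) = ennreal (suminf (a n M))"
    by (rule suminf_ennreal2[OF a_nonneg summ])
  finally show ?thesis using si by simp
qed

lemma HH0_le:
  assumes "1 \<le> M" "M \<le> n"
  shows "HH n M 0 \<le> real n ^ 3"
proof -
  have "HH n M 0 \<le> real n ^ 3 * ss n 0" by (rule HH_le[OF assms(2)])
  also have "\<dots> \<le> real n ^ 3 * 1" using ss_le1[OF assms] by (intro mult_left_mono) auto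
  finally show ?thesis by simp
qed

theorem theorem4:
  fixes c :: real
  assumes "0 < c" and "c \<le> 1"
  shows "\<exists>C1 C2 :: real. \<exists>N :: nat. 0 < C1 \<and> 0 < C2 \<and>
           (\<forall>n M :: nat. n \<ge> N \<longrightarrow> real M = c * real n \<longrightarrow>
              ennreal (C1 * real n ^ 3) \<le> ia_expected_runtime n M (leading_ones n) \<and>
              ia_expected_runtime n M (leading_ones n) \<le> ennreal (C2 * real n ^ 3))"
proof (intro exI conjI allI impI)
  show "0 < c / 16" using assms by simp
  show "(0::real) < 2" by simp
  fix n M :: nat
  assume nN: "nat \<lceil>2 / c\<rceil> + 2 \<le> n" and M: "real M = c * real n"
  have n2: "2 \<le> n" using nN by simp
  have "2 / c \<le> real n" using nN by linarith
  then have "2 \<le> c * real n" using assms by (simp add: field_simps)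
  then have M1: "1 \<le> M" using M by simp
  have "c * real n \<le> 1 * real n" using assms by (intro mult_right_mono) auto
  then have Mn: "M \<le> n" using M by simp
  have req: "ia_expected_runtime n M (leading_ones n) = 1 + ennreal (HH n M 0)"
    by (rule runtime_eq[OF M1 Mn])
  have hn: "0 \<le> HH n M 0" by (rule HH_nonneg)
  have lo': "real M * real n * (real n - 1) / 8 \<le> HH n M 0" using HH0_ge[of n M] n2 by simp
  have "c / 16 * real n ^ 3 \<le> real M * real n * (real n - 1) / 8"
  proof -
    have "real n \<le> 2 * (real n - 1)" using n2 by simp
    then have "c * real n * real n * real n \<le> c * real n * real n * (2 * (real n - 1))"
      using assms by (intro mult_left_mono) auto
    then show ?thesis using M by (simp add: power3_eq_cube field_simps)
  qed
  then have "c / 16 * real n ^ 3 \<le> HH n M 0" using lo' by linarith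
  then have "ennreal (c / 16 * real n ^ 3) \<le> ennreal (HH n M 0)" by (rule ennreal_leI)
  also have "\<dots> \<le> 1 + ennreal (HH n M 0)" by simp
  finally show "ennreal (c / 16 * real n ^ 3) \<le> ia_expected_runtime n M (leading_ones n)"
    using req by simp
  have "1 + HH n M 0 \<le> 2 * real n ^ 3"
  proof -
    have "1 \<le> real n ^ 3" using n2 by simp
    then show ?thesis using HH0_le[OF M1 Mn] by simp
  qed
  then have "ennreal (1 + HH n M 0) \<le> ennreal (2 * real n ^ 3)" by (rule ennreal_leI)
  then show "ia_expected_runtime n M (leading_ones n) \<le> ennreal (2 * real n ^ 3)"
    using req hn by (simp add: ennreal_plus[symmetric])
qed

end
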